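(* Let $L$ be the adjoint module of $gl(1|1)$. For every $n\ge1$, the space of invariant tensors $\mathrm{Inv}(L^{\otimes n})=\{v\in L^{\otimes n}: g v=0\ \text{for all } g\in gl(1|1)\}$ has dimension $\binom{2n-2}{n-1}$.
   Context: $gl(1|1)$ is the Lie superalgebra with basis $H,G$ (even), $Q_+,Q_-$ (odd), nonzero supercommutators $[G,Q_\pm]=\pm Q_\pm$, $[Q_+,Q_-]=H$. It acts on $L^{\otimes n}$ (where $L=gl(1|1)$ with the adjoint action) by the super Leibniz rule with Koszul signs. *)

theory Defs
  imports Complex_Main "HOL-Library.Function_Algebras"
begin

text \<open>Basis of gl(1|1): H, G even; Qp = Q_+, Qm = Q_- odd.\<close>
datatype gl11 = H | G | Qp | Qm

fun par :: "gl11 \<Rightarrow> nat" where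
  "par H = 0" | "par G = 0" | "par Qp = 1" | "par Qm = 1"

definition unitv :: "gl11 \<Rightarrow> gl11 \<Rightarrow> complex" where
  "unitv a = (\<lambda>b. if b = a then 1 else 0)"

text \<open>Supercommutator of basis elements, as a coordinate vector in L = gl(1|1).\<close>
fun br :: "gl11 \<Rightarrow> gl11 \<Rightarrow> gl11 \<Rightarrow> complex" where
  "br G Qp = unitv Qp"
| "br G Qm = (\<lambda>b. - unitv Qm b)"
| "br Qp G = (\<lambda>b. - unitv Qp b)"
| "br Qm G = unitv Qm"
| "br Qp Qm = unitv H"
| "br Qm Qp = unitv H"
| "br _ _ = (\<lambda>_. 0)"

text \<open>Vectors of L^{\<otimes>n}: coordinate functions on words (basis tensors
  e_{w1} \<otimes> ... \<otimes> e_{wn}) of length n, vanishing on other words.\<close>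
definition words :: "nat \<Rightarrow> gl11 list set" where
  "words n = set (List.n_lists n [H, G, Qp, Qm])"

definition tensor_space :: "nat \<Rightarrow> (gl11 list \<Rightarrow> complex) set" where
  "tensor_space n = {v. \<forall>w. length w \<noteq> n \<longrightarrow> v w = 0}"

text \<open>The basis tensor w with its i-th factor replaced by the vector c of L.\<close>
definition subst_at :: "gl11 list \<Rightarrow> nat \<Rightarrow> (gl11 \<Rightarrow> complex) \<Rightarrow> gl11 list \<Rightarrow> complex" where
  "subst_at w i c = (\<lambda>w'. if length w' = length w \<and> (\<forall>j<length w. j \<noteq> i \<longrightarrow> w' ! j = w ! j)
                          then c (w' ! i) else 0)"

text \<open>Super Leibniz rule with Koszul signs: action of basis element a on a basis tensor.\<close>
definition act_word :: "gl11 \<Rightarrow> gl11 list \<Rightarrow> gl11 list \<Rightarrow> complex" where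
  "act_word a w = (\<lambda>w'. \<Sum>i<length w.
      (-1) ^ (par a * (\<Sum>j<i. par (w ! j))) * subst_at w i (br a (w ! i)) w')"

definition act_basis :: "gl11 \<Rightarrow> nat \<Rightarrow> (gl11 list \<Rightarrow> complex) \<Rightarrow> gl11 list \<Rightarrow> complex" where
  "act_basis a n v = (\<lambda>w'. \<Sum>w\<in>words n. v w * act_word a w w')"

text \<open>Action of a general element x = \<Sum> x(a) a of gl(1|1) on L^{\<otimes>n}.\<close>
definition act :: "(gl11 \<Rightarrow> complex) \<Rightarrow> nat \<Rightarrow> (gl11 list \<Rightarrow> complex) \<Rightarrow> gl11 list \<Rightarrow> complex" where
  "act x n v = (\<lambda>w'. \<Sum>a\<in>{H, G, Qp, Qm}. x a * act_basis a n v w')"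

definition Inv :: "nat \<Rightarrow> (gl11 list \<Rightarrow> complex) set" where
  "Inv n = {v \<in> tensor_space n. \<forall>x. act x n v = (\<lambda>_. 0)}"

definition cscale :: "complex \<Rightarrow> (gl11 list \<Rightarrow> complex) \<Rightarrow> gl11 list \<Rightarrow> complex" where
  "cscale c v = (\<lambda>w. c * v w)"

end

theory Submission
  imports Defs
begin

lemma all_gl11: "x \<in> {H, G, Qp, Qm}"
  by (cases x) auto

lemma words_eq: "words n = {w. length w = n}"
  unfolding words_def set_n_lists using all_gl11 by auto

lemma finite_words: "finite (words n)"
  unfolding words_def by simp

lemma sum_words_Suc:
  "(\<Sum>w\<in>words (Suc m). f w) = (\<Sum>e\<in>{H, G, Qp, Qm}. \<Sum>u\<in>words m. f (e # u))"
proof -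
  have eq: "words (Suc m) = (\<lambda>(e, u). e # u) ` ({H, G, Qp, Qm} \<times> words m)"
    unfolding words_eq
    apply (auto simp: image_iff length_Suc_conv all_gl11)
    by (metis all_gl11 insertE singletonD)
  have inj: "inj_on (\<lambda>(e, u). e # u) ({H, G, Qp, Qm} \<times> words m)"
    by (auto simp: inj_on_def)
  have "(\<Sum>e\<in>{H, G, Qp, Qm}. \<Sum>u\<in>words m. f (e # u)) = (\<Sum>(e,u)\<in>{H, G, Qp, Qm} \<times> words m. f (e # u))"
    by (rule sum.cartesian_product)
  then show ?thesis
    unfolding eq sum.reindex[OF inj] by (simp add: case_prod_unfold)
qed

fun T :: "gl11 \<Rightarrow> (gl11 list \<Rightarrow> complex) \<Rightarrow> gl11 list \<Rightarrow> complex" where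
  "T a v [] = 0"
| "T a v (e' # u) = (\<Sum>e\<in>{H, G, Qp, Qm}. br a e e' * v (e # u))
     + (-1) ^ (par a * par e') * T a (\<lambda>u. v (e' # u)) u"

lemma act_word_Nil: "act_word a [] w' = 0"
  by (simp add: act_word_def)

lemma subst0: "subst_at (e # w) 0 c (e' # u) = (if u = w then c e' else 0)"
  unfolding subst_at_def
  by (auto simp: list_eq_iff_nth_eq less_Suc_eq_0_disj)

lemma substS: "subst_at (e # w) (Suc i) c (e' # u) = (if e = e' then subst_at w i c u else 0)"
  unfolding subst_at_def
  by (auto simp: less_Suc_eq_0_disj)

lemma act_word_Cons:
  "act_word a (e # w) (e' # u) =
     (if u = w then br a e e' else 0) + (if e = e' then (-1) ^ (par a * par e) * act_word a w u else 0)"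
proof -
  have "act_word a (e # w) (e' # u) = subst_at (e # w) 0 (br a e) (e' # u) +
     (\<Sum>i<length w. (-1) ^ (par a * (par e + (\<Sum>j<i. par (w ! j)))) * subst_at (e # w) (Suc i) (br a (w ! i)) (e' # u))"
    unfolding act_word_def by (simp add: sum.lessThan_Suc_shift del: sum.lessThan_Suc)
  also have "\<dots> = (if u = w then br a e e' else 0) + (if e = e' then (-1) ^ (par a * par e) * act_word a w u else 0)"
    unfolding subst0 substS act_word_def
    by (auto simp: sum_distrib_left power_add distrib_left intro!: sum.cong)
  finally show ?thesis .
qed

lemma act_word_len: "length w' \<noteq> length w \<Longrightarrow> act_word a w w' = 0"
  by (simp add: act_word_def subst_at_def)

lemma act_basis_T:
  "act_basis a n v w' = (if length w' = n then T a v w' else 0)"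
proof (induction n arbitrary: v w')
  case 0
  have "words 0 = {[]}" by (auto simp: words_eq)
  then show ?case
    by (cases w') (auto simp: act_basis_def act_word_Nil)
next
  case (Suc m)
  show ?case
  proof (cases w')
    case Nil
    then show ?thesis by (auto simp: act_basis_def words_eq act_word_len intro!: sum.neutral)
  next
    case (Cons e' u)
    let ?E = "{H, G, Qp, Qm}"
    let ?s = "(-1::complex) ^ (par a * par e')"
    have "act_basis a (Suc m) v (e' # u) = (\<Sum>e\<in>?E. \<Sum>w\<in>words m. v (e # w) *
        ((if u = w then br a e e' else 0) + (if e = e' then (-1) ^ (par a * par e) * act_word a w u else 0)))"
      by (simp add: act_basis_def sum_words_Suc act_word_Cons del: insert_iff)
    also have "\<dots> = (\<Sum>e\<in>?E. \<Sum>w\<in>words m. (if u = w then v (e # w) * br a e e' else 0)) +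
        (\<Sum>e\<in>?E. if e = e' then (\<Sum>w\<in>words m. (-1) ^ (par a * par e) * (v (e # w) * act_word a w u)) else 0)"
    proof -
      have pt: "\<And>e w. v (e # w) * ((if u = w then br a e e' else 0) + (if e = e' then (-1) ^ (par a * par e) * act_word a w u else 0))
         = (if u = w then v (e # w) * br a e e' else 0) + (if e = e' then (-1) ^ (par a * par e) * (v (e # w) * act_word a w u) else 0)"
        by (auto simp: algebra_simps)
      have pt2: "\<And>e. (\<Sum>w\<in>words m. (if e = e' then (-1) ^ (par a * par e) * (v (e # w) * act_word a w u) else 0))
        = (if e = e' then (\<Sum>w\<in>words m. (-1) ^ (par a * par e) * (v (e # w) * act_word a w u)) else 0)"
        by auto
      show ?thesis by (simp only: pt sum.distrib pt2)
    qed
    also have "\<dots> = (if length u = m then (\<Sum>e\<in>?E. v (e # u) * br a e e') else 0) +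
        ?s * act_basis a m (\<lambda>w. v (e' # w)) u"
      apply (simp add: finite_words act_basis_def sum_distrib_left del: insert_iff)
      apply (simp add: words_eq mult_ac all_gl11 del: insert_iff)
      done
    also have "\<dots> = (if length w' = Suc m then T a v w' else 0)"
      using Suc.IH by (simp add: Cons mult_ac)
    finally show ?thesis using Cons by simp
  qed
qed

lemma T_lin: "T a (\<lambda>w. c * f w + d * g w) u = c * T a f u + d * T a g u"
  by (induction u arbitrary: f g) (auto simp: algebra_simps sum.distrib sum_distrib_left)

lemma T_add: "T a (\<lambda>w. f w + g w) u = T a f u + T a g u"
  using T_lin[of a 1 f 1 g u] by simp

lemma T_cmult: "T a (\<lambda>w. c * f w) u = c * T a f u"
  using T_lin[of a c f 0 f u] by simp

lemma T_minus: "T a (\<lambda>w. - f w) u = - T a f u"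
  using T_lin[of a "-1" f 0 f u] by simp

lemma T_diff: "T a (\<lambda>w. f w - g w) u = T a f u - T a g u"
  using T_lin[of a 1 f "-1" g u] by simp

lemma T_zero: "(\<And>w. length w = length u \<Longrightarrow> f w = 0) \<Longrightarrow> T a f u = 0"
  by (induction u arbitrary: f) auto

lemma T_zero_fun: "T a (\<lambda>_. 0) u = 0"
  by (rule T_zero) auto

lemma T_zero_fun': "T a (\<lambda>_. 0) = (\<lambda>_. 0)"
  by (rule ext) (rule T_zero_fun)

lemma X_simps:
  "T Qp v (G # u) = T Qp (\<lambda>u. v (G # u)) u"
  "T Qp v (Qp # u) = - v (G # u) - T Qp (\<lambda>u. v (Qp # u)) u"
  "T Qp v (Qm # u) = - T Qp (\<lambda>u. v (Qm # u)) u"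
  "T Qp v (H # u) = v (Qm # u) + T Qp (\<lambda>u. v (H # u)) u"
  by (simp_all add: unitv_def)

lemma Y_simps:
  "T Qm v (G # u) = T Qm (\<lambda>u. v (G # u)) u"
  "T Qm v (Qp # u) = - T Qm (\<lambda>u. v (Qp # u)) u"
  "T Qm v (Qm # u) = v (G # u) - T Qm (\<lambda>u. v (Qm # u)) u"
  "T Qm v (H # u) = v (Qp # u) + T Qm (\<lambda>u. v (H # u)) u"
  by (simp_all add: unitv_def)

lemma TH: "T H v u = 0"
  by (induction u arbitrary: v) auto

fun wt :: "gl11 \<Rightarrow> int" where
  "wt Qp = 1" | "wt Qm = -1" | "wt H = 0" | "wt G = 0"

definition wsum :: "gl11 list \<Rightarrow> int" where
  "wsum w = sum_list (map wt w)"

lemma TG: "T G v u = of_int (wsum u) * v u"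
proof (induction u arbitrary: v)
  case Nil then show ?case by (simp add: wsum_def)
next
  case (Cons e u)
  then show ?case by (cases e) (auto simp: unitv_def wsum_def algebra_simps)
qed

declare T.simps(2)[simp del]

lemma XX: "T Qp (T Qp v) u = 0"
proof (induction u arbitrary: v)
  case Nil then show ?case by simp
next
  case (Cons e u)
  then show ?case by (cases e) (simp_all add: X_simps T_add T_minus T_diff)
qed

lemma YY: "T Qm (T Qm v) u = 0"
proof (induction u arbitrary: v)
  case Nil then show ?case by simp
next
  case (Cons e u)
  then show ?case by (cases e) (simp_all add: Y_simps T_add T_minus T_diff)
qed

lemma XY: "T Qm (T Qp v) u = - T Qp (T Qm v) u"
proof (induction u arbitrary: v)
  case Nil then show ?case by simp
next
  case (Cons e u)
  then show ?case by (cases e) (simp_all add: X_simps Y_simps T_add T_minus T_diff)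
qed

definition supp :: "int \<Rightarrow> (gl11 list \<Rightarrow> complex) \<Rightarrow> bool" where
  "supp k d \<longleftrightarrow> (\<forall>w. wsum w \<noteq> k \<longrightarrow> d w = 0)"

lemma X_supp: "supp k d \<Longrightarrow> supp (k + 1) (T Qp d)"
  unfolding supp_def
proof (intro allI impI)
  fix w assume "\<forall>w. wsum w \<noteq> k \<longrightarrow> d w = 0" "wsum w \<noteq> k + 1"
  then show "T Qp d w = 0"
  proof (induction w arbitrary: k d)
    case Nil then show ?case by simp
  next
    case (Cons e u)
    show ?case
    proof (cases e)
      case H
      have "T Qp (\<lambda>u. d (H # u)) u = 0"
        by (rule Cons.IH[of k]) (use Cons.prems H in \<open>auto simp: wsum_def\<close>)
      then show ?thesis using Cons.prems H by (simp add: X_simps wsum_def)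
    next
      case G
      have "T Qp (\<lambda>u. d (G # u)) u = 0"
        by (rule Cons.IH[of k]) (use Cons.prems G in \<open>auto simp: wsum_def\<close>)
      then show ?thesis using Cons.prems G by (simp add: X_simps wsum_def)
    next
      case Qp
      have "T Qp (\<lambda>u. d (Qp # u)) u = 0"
        by (rule Cons.IH[of "k - 1"]) (use Cons.prems Qp in \<open>auto simp: wsum_def\<close>)
      then show ?thesis using Cons.prems Qp by (simp add: X_simps wsum_def)
    next
      case Qm
      have "T Qp (\<lambda>u. d (Qm # u)) u = 0"
        by (rule Cons.IH[of "k + 1"]) (use Cons.prems Qm in \<open>auto simp: wsum_def\<close>)
      then show ?thesis using Cons.prems Qm by (simp add: X_simps wsum_def)
    qed
  qed
qed

lemma Y_supp: "supp k d \<Longrightarrow> supp (k - 1) (T Qm d)"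
  unfolding supp_def
proof (intro allI impI)
  fix w assume "\<forall>w. wsum w \<noteq> k \<longrightarrow> d w = 0" "wsum w \<noteq> k - 1"
  then show "T Qm d w = 0"
  proof (induction w arbitrary: k d)
    case Nil then show ?case by simp
  next
    case (Cons e u)
    show ?case
    proof (cases e)
      case H
      have "T Qm (\<lambda>u. d (H # u)) u = 0"
        by (rule Cons.IH[of k]) (use Cons.prems H in \<open>auto simp: wsum_def\<close>)
      then show ?thesis using Cons.prems H by (simp add: Y_simps wsum_def)
    next
      case G
      have "T Qm (\<lambda>u. d (G # u)) u = 0"
        by (rule Cons.IH[of k]) (use Cons.prems G in \<open>auto simp: wsum_def\<close>)
      then show ?thesis using Cons.prems G by (simp add: Y_simps wsum_def)
    next
      case Qp
      have "T Qm (\<lambda>u. d (Qp # u)) u = 0"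
        by (rule Cons.IH[of "k - 1"]) (use Cons.prems Qp in \<open>auto simp: wsum_def\<close>)
      then show ?thesis using Cons.prems Qp by (simp add: Y_simps wsum_def)
    next
      case Qm
      have "T Qm (\<lambda>u. d (Qm # u)) u = 0"
        by (rule Cons.IH[of "k + 1"]) (use Cons.prems Qm in \<open>auto simp: wsum_def\<close>)
      then show ?thesis using Cons.prems Qm by (simp add: Y_simps wsum_def)
    qed
  qed
qed


lemma XX_fun: "T Qp (T Qp v) = (\<lambda>_. 0)" by (rule ext) (rule XX)
lemma YY_fun: "T Qm (T Qm v) = (\<lambda>_. 0)" by (rule ext) (rule YY)

lemma act_unitv: "act (unitv a) n v w' = act_basis a n v w'"
  by (cases a) (simp_all add: act_def unitv_def)

lemma Inv_char:
  "v \<in> Inv n \<longleftrightarrow> v \<in> tensor_space n \<and> (\<forall>w. T Qp v w = 0) \<and> (\<forall>w. T Qm v w = 0)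
     \<and> (\<forall>w. wsum w \<noteq> 0 \<longrightarrow> v w = 0)"
proof
  assume v: "v \<in> Inv n"
  then have ts: "v \<in> tensor_space n" and z: "\<And>x. act x n v = (\<lambda>_. 0)" by (auto simp: Inv_def)
  have ab: "act_basis a n v w' = 0" for a w'
    using fun_cong[OF z[of "unitv a"], of w'] by (simp add: act_unitv)
  have Tz: "T a v w = 0" if "a \<noteq> G" for a w
  proof (cases "length w = n")
    case True then show ?thesis using ab[of a w] by (simp add: act_basis_T)
  next
    case False then show ?thesis using ts by (intro T_zero) (auto simp: tensor_space_def)
  qed
  have "v w = 0" if "wsum w \<noteq> 0" for w
  proof (cases "length w = n")
    case True then show ?thesis using ab[of G w] that by (simp add: act_basis_T TG)
  next
    case False then show ?thesis using ts by (auto simp: tensor_space_def)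
  qed
  then show "v \<in> tensor_space n \<and> (\<forall>w. T Qp v w = 0) \<and> (\<forall>w. T Qm v w = 0)
     \<and> (\<forall>w. wsum w \<noteq> 0 \<longrightarrow> v w = 0)" using ts Tz by auto
next
  assume h: "v \<in> tensor_space n \<and> (\<forall>w. T Qp v w = 0) \<and> (\<forall>w. T Qm v w = 0)
     \<and> (\<forall>w. wsum w \<noteq> 0 \<longrightarrow> v w = 0)"
  have "act x n v = (\<lambda>_. 0)" for x
  proof
    fix w'
    have "act_basis a n v w' = 0" for a
      using h by (cases a) (auto simp: act_basis_T TH TG)
    then show "act x n v w' = 0" by (simp add: act_def)
  qed
  then show "v \<in> Inv n" using h by (simp add: Inv_def)
qed

definition Phi :: "(gl11 list \<Rightarrow> complex) \<Rightarrow> gl11 list \<Rightarrow> complex" where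
  "Phi d = (\<lambda>w. case w of [] \<Rightarrow> 0 | e # u \<Rightarrow> (case e of H \<Rightarrow> d u | Qp \<Rightarrow> - T Qm d u
      | Qm \<Rightarrow> - T Qp d u | G \<Rightarrow> T Qp (T Qm d) u))"

lemma Phi_simps:
  "Phi d [] = 0" "Phi d (H # u) = d u" "Phi d (Qp # u) = - T Qm d u"
  "Phi d (Qm # u) = - T Qp d u" "Phi d (G # u) = T Qp (T Qm d) u"
  by (simp_all add: Phi_def)

lemma Phi_Inv:
  assumes ts: "d \<in> tensor_space m" and sp: "supp 0 d"
  shows "Phi d \<in> Inv (Suc m)"
  unfolding Inv_char
proof (intro conjI allI impI)
  have T0: "T a f u = 0" if "\<And>w. length w = length u \<Longrightarrow> f w = 0" for a f and u :: "gl11 list"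
    using that by (rule T_zero)
  have dz: "length u \<noteq> m \<Longrightarrow> d u = 0" for u using ts by (simp add: tensor_space_def)
  show "Phi d \<in> tensor_space (Suc m)"
    unfolding tensor_space_def
  proof (intro CollectI allI impI)
    fix w :: "gl11 list" assume "length w \<noteq> Suc m"
    then show "Phi d w = 0"
      by (cases w) (auto simp: Phi_def dz split: gl11.split intro!: T0)
  qed
  show "T Qp (Phi d) w = 0" for w
    by (cases w; cases "hd w") (simp_all add: X_simps Phi_simps T_minus XX_fun T_zero_fun)
  show "T Qm (Phi d) w = 0" for w
    by (cases w; cases "hd w") (simp_all add: Y_simps Phi_simps T_minus YY_fun XY T_zero_fun)
  show "Phi d w = 0" if "wsum w \<noteq> 0" for w
  proof (cases w)
    case Nil then show ?thesis by (simp add: Phi_simps)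
  next
    case (Cons e u)
    have s1: "supp (-1) (T Qm d)" using Y_supp[OF sp] by simp
    have s2: "supp 1 (T Qp d)" using X_supp[OF sp] by simp
    have s3: "supp 0 (T Qp (T Qm d))" using X_supp[OF s1] by simp
    show ?thesis using that sp s1 s2 s3 Cons
      by (cases e) (auto simp: Phi_simps supp_def wsum_def)
  qed
qed

lemma Inv_Phi:
  assumes v: "v \<in> Inv (Suc m)"
  shows "v = Phi (\<lambda>u. v (H # u))"
proof
  fix w
  let ?d = "\<lambda>u. v (H # u)"
  from v have ts: "v \<in> tensor_space (Suc m)" and X0: "\<And>w. T Qp v w = 0" and Y0: "\<And>w. T Qm v w = 0"
    by (auto simp: Inv_char)
  have qp: "v (Qp # u) = - T Qm ?d u" for u
    using Y0[of "H # u"] by (simp add: Y_simps eq_neg_iff_add_eq_0)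
  have qm: "v (Qm # u) = - T Qp ?d u" for u
    using X0[of "H # u"] by (simp add: X_simps eq_neg_iff_add_eq_0)
  have qpf: "(\<lambda>u. v (Qp # u)) = (\<lambda>u. - T Qm ?d u)" using qp by auto
  have g: "v (G # u) = T Qp (T Qm ?d) u" for u
    using X0[of "Qp # u"] by (simp add: X_simps qpf T_minus)
  show "v w = Phi ?d w"
  proof (cases w)
    case Nil then show ?thesis using ts by (simp add: tensor_space_def Phi_simps)
  next
    case (Cons e u) then show ?thesis using qp qm g by (cases e) (simp_all add: Phi_simps)
  qed
qed


interpretation cs: vector_space cscale
  by unfold_locales (auto simp: cscale_def algebra_simps fun_eq_iff)

lemma sum_fun_apply: "(sum f A) x = (\<Sum>a\<in>A. f a x)"
  by (induction A rule: infinite_finite_induct) auto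

lemma Inv_subspace: "cs.subspace (Inv n)"
proof (rule cs.subspaceI)
  show "0 \<in> Inv n"
    by (simp add: Inv_char tensor_space_def zero_fun_def T_zero_fun)
next
  fix x y assume "x \<in> Inv n" "y \<in> Inv n"
  then show "x + y \<in> Inv n"
    by (simp add: Inv_char tensor_space_def plus_fun_def T_add)
next
  fix c x assume "x \<in> Inv n"
  then show "cscale c x \<in> Inv n"
    by (simp add: Inv_char tensor_space_def cscale_def T_cmult)
qed

definition delta :: "gl11 list \<Rightarrow> gl11 list \<Rightarrow> complex" where
  "delta w = (\<lambda>u. if u = w then 1 else 0)"

lemma Phi_zero: "Phi (\<lambda>_. 0) = (\<lambda>_. 0)"
  by (rule ext) (auto simp: Phi_def T_zero_fun T_zero_fun' split: list.split gl11.split)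

lemma dim_Inv_Suc:
  "cs.dim (Inv (Suc m)) = card {w \<in> words m. wsum w = 0}"
proof -
  define W0 where "W0 = {w \<in> words m. wsum w = 0}"
  define b where "b w = Phi (delta w)" for w
  define B where "B = b ` W0"
  have finW0: "finite W0" unfolding W0_def using finite_words by simp
  have bH: "b w (H # u) = (if u = w then 1 else 0)" for w u
    by (simp add: b_def Phi_simps delta_def)
  have inj: "inj_on b W0"
  proof (rule inj_onI)
    fix x y assume "b x = b y"
    then have "b x (H # x) = b y (H # x)" by simp
    then show "x = y" by (simp add: bH split: if_splits)
  qed
  have BInv: "B \<subseteq> Inv (Suc m)"
  proof
    fix v assume "v \<in> B"
    then obtain w where w: "w \<in> W0" "v = b w" by (auto simp: B_def)
    have "delta w \<in> tensor_space m" using w by (auto simp: W0_def words_eq tensor_space_def delta_def)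
    moreover have "supp 0 (delta w)" using w by (auto simp: W0_def supp_def delta_def)
    ultimately show "v \<in> Inv (Suc m)" using w Phi_Inv by (simp add: b_def)
  qed
  have indep: "cs.independent B"
    unfolding cs.independent_explicit_module
  proof (intro allI impI)
    fix t c v assume fin: "finite t" and tB: "t \<subseteq> B" and sum0: "(\<Sum>v\<in>t. cscale (c v) v) = 0" and vt: "v \<in> t"
    then obtain w where w: "w \<in> W0" "v = b w" by (auto simp: B_def)
    have oth: "x (H # w) = 0" if "x \<in> t - {v}" for x
    proof -
      from that tB obtain w' where "x = b w'" "x \<noteq> v" by (auto simp: B_def)
      then show ?thesis using w by (auto simp: bH)
    qed
    have "0 = (\<Sum>v\<in>t. cscale (c v) v) (H # w)" using sum0 by simp
    also have "\<dots> = (\<Sum>x\<in>t. c x * x (H # w))"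
      by (simp add: sum_fun_apply cscale_def)
    also have "\<dots> = c v * v (H # w) + (\<Sum>x\<in>t - {v}. c x * x (H # w))"
      using fin vt by (rule sum.remove)
    also have "\<dots> = c v"
    proof -
      have "(\<Sum>x\<in>t - {v}. c x * x (H # w)) = 0" using oth by (intro sum.neutral) auto
      then show ?thesis using w by (simp add: bH)
    qed
    finally show "c v = 0" by simp
  qed
  have sub: "Inv (Suc m) \<subseteq> cs.span B"
  proof
    fix v assume v: "v \<in> Inv (Suc m)"
    let ?d = "\<lambda>u. v (H # u)"
    define s where "s = (\<Sum>w\<in>W0. cscale (?d w) (b w))"
    have sspan: "s \<in> cs.span B"
      unfolding s_def by (intro cs.span_sum cs.span_scale cs.span_base) (auto simp: B_def)
    have spanInv: "cs.span B \<subseteq> Inv (Suc m)"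
      using BInv Inv_subspace by (rule cs.span_minimal)
    have uInv: "v - s \<in> Inv (Suc m)"
      using cs.subspace_diff[OF Inv_subspace v] sspan spanInv by auto
    have dz: "?d u = 0" if "u \<notin> W0" for u
    proof -
      from v have ts: "v \<in> tensor_space (Suc m)" and wz: "\<And>w. wsum w \<noteq> 0 \<Longrightarrow> v w = 0"
        by (auto simp: Inv_char)
      show ?thesis
      proof (cases "length u = m")
        case True
        then have "wsum (H # u) \<noteq> 0" using that by (simp add: W0_def words_eq wsum_def)
        then show ?thesis using wz by simp
      next
        case False then show ?thesis using ts by (simp add: tensor_space_def)
      qed
    qed
    have "(\<lambda>u. (v - s) (H # u)) = (\<lambda>_. 0)"
    proof
      fix u
      have "s (H # u) = (\<Sum>w\<in>W0. ?d w * (if u = w then 1 else 0))"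
        by (simp add: s_def sum_fun_apply cscale_def bH)
      also have "\<dots> = (if u \<in> W0 then ?d u else 0)"
        using finW0 by (simp add: if_distrib sum.delta' cong: if_cong)
      finally show "(v - s) (H # u) = 0" using dz by auto
    qed
    then have "v - s = 0" using Inv_Phi[OF uInv] Phi_zero by (simp add: zero_fun_def)
    then show "v \<in> cs.span B" using sspan by simp
  qed
  have "cs.span B = Inv (Suc m)"
    using BInv sub Inv_subspace by (rule cs.span_subspace)
  then have "cs.dim (Inv (Suc m)) = card B"
    using cs.dim_span_eq_card_independent[OF indep] by simp
  also have "\<dots> = card W0" using inj by (simp add: B_def card_image)
  finally show ?thesis by (simp add: W0_def)
qed


fun mu :: "gl11 \<Rightarrow> nat" where
  "mu Qp = 2" | "mu Qm = 0" | "mu H = 1" | "mu G = 1"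

definition msum :: "gl11 list \<Rightarrow> nat" where
  "msum w = sum_list (map mu w)"

lemma msum_wsum: "int (msum w) = wsum w + int (length w)"
proof (induction w)
  case Nil then show ?case by (simp add: msum_def wsum_def)
next
  case (Cons e w) then show ?case by (cases e) (auto simp: msum_def wsum_def)
qed

definition cnt :: "nat \<Rightarrow> nat \<Rightarrow> nat" where
  "cnt m j = (\<Sum>w\<in>words m. if msum w = j then 1 else 0)"

lemma shift_sum:
  fixes k j :: nat and f :: "'a \<Rightarrow> nat"
  shows "(\<Sum>u\<in>A. if k + f u = j then 1 else 0 :: nat) = (if k \<le> j then (\<Sum>u\<in>A. if f u = j - k then 1 else 0) else 0)"
  by (auto intro!: sum.cong sum.neutral)

lemma cnt_Suc:
  "cnt (Suc m) j = (if 2 \<le> j then cnt m (j - 2) else 0) + 2 * (if 1 \<le> j then cnt m (j - 1) else 0) + cnt m j"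
proof -
  have "cnt (Suc m) j = (\<Sum>e\<in>{H, G, Qp, Qm}. \<Sum>u\<in>words m. if mu e + msum u = j then 1 else 0)"
    unfolding cnt_def sum_words_Suc by (simp add: msum_def)
  also have "\<dots> = (if 2 \<le> j then cnt m (j - 2) else 0) + 2 * (if 1 \<le> j then cnt m (j - 1) else 0) + cnt m j"
    unfolding shift_sum by (simp add: cnt_def)
  finally show ?thesis .
qed

lemma cnt_binom: "cnt m j = (2 * m) choose j"
proof (induction m arbitrary: j)
  case 0
  have "words 0 = {[]}" by (auto simp: words_eq)
  then show ?case by (simp add: cnt_def msum_def)
next
  case (Suc m)
  show ?case
  proof (cases j)
    case 0 then show ?thesis by (simp add: cnt_Suc Suc.IH)
  next
    case (Suc j')
    show ?thesis
    proof (cases j')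
      case 0 then show ?thesis using Suc by (simp add: cnt_Suc Suc.IH)
    next
      case (Suc k)
      then show ?thesis using \<open>j = Suc j'\<close> by (simp add: cnt_Suc Suc.IH)
    qed
  qed
qed

lemma card_W0: "card {w \<in> words m. wsum w = 0} = (2 * m) choose m"
proof -
  have eq: "{w \<in> words m. wsum w = 0} = {w \<in> words m. msum w = m}"
  proof -
    have "wsum w = 0 \<longleftrightarrow> msum w = m" if "length w = m" for w
    proof -
      have "int (msum w) = wsum w + int m" using msum_wsum[of w] that by simp
      then show ?thesis by linarith
    qed
    then show ?thesis by (auto simp: words_eq)
  qed
  have "card {w \<in> words m. msum w = m} = (\<Sum>w\<in>{w \<in> words m. msum w = m}. 1)" by simp
  also have "\<dots> = cnt m m" unfolding cnt_def by (rule sum.inter_filter[OF finite_words])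
  finally show ?thesis using eq cnt_binom by simp
qed

theorem proposition2p5:
  fixes n :: nat
  assumes "n \<ge> 1"
  shows "vector_space.dim cscale (Inv n) = (2 * n - 2) choose (n - 1)"
proof -
  obtain m where n: "n = Suc m" using assms by (cases n) auto
  have "vector_space.dim cscale (Inv n) = (2 * m) choose m"
    unfolding n dim_Inv_Suc card_W0 ..
  then show ?thesis using n by simp
qed

end
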